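(* Let $C_{12},C_{13},C_{23}$ be compatible bivariate copulas, let $C_{ji}(u,v):=C_{ij}(v,u)$ for $1\le i<j\le 3$, and let $\mathcal P=\{(1,2,3),(1,3,2),(2,1,3)\}$. Then for every $3$-copula $\widetilde C$ with $\widetilde C(u_1,u_2,1)=C_{12}(u_1,u_2)$, $\widetilde C(u_1,1,u_3)=C_{13}(u_1,u_3)$, $\widetilde C(1,u_2,u_3)=C_{23}(u_2,u_3)$, and all $u_1,u_2,u_3\in[0,1]$, \[ C_L(u_1,u_2,u_3)\le\widetilde C(u_1,u_2,u_3)\le C_U(u_1,u_2,u_3), \] where \[ C_L(u_1,u_2,u_3)=\max_{(i,j,k)\in\mathcal P}\max\Big\{(C_{ij}\star_{W_2}C_{jk})(u_i,u_j,u_k),\ (C_{ij}\star_{M_2}C_{jk})(u_i,u_j,u_k)+C_{ik}(u_i,u_k)-(C_{ij}\ast_{M_2}C_{jk})(u_i,u_k)\Big\}, \] \[ C_U(u_1,u_2,u_3)=\min_{(i,j,k)\in\mathcal P}\min\Big\{(C_{ij}\star_{M_2}C_{jk})(u_i,u_j,u_k),\ (C_{ij}\star_{W_2}C_{jk})(u_i,u_j,u_k)+C_{ik}(u_i,u_k)-(C_{ij}\ast_{W_2}C_{jk})(u_i,u_k)\Big\}. \]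
   Context: A bivariate copula is a distribution function on $[0,1]^2$ with uniform $[0,1]$ marginals; a $3$-copula is a distribution function on $[0,1]^3$ with uniform $[0,1]$ one-dimensional marginals. Bivariate copulas are compatible if they are the bivariate marginals (in the sense stated in the claim) of some $3$-copula. $W_2(u,v)=\max\{u+v-1,0\}$, $M_2(u,v)=\min\{u,v\}$. For bivariate copulas $A,B$ and a bivariate copula $C$: $(A\ast_{C} B)(x,z)=\int_{0}^{1} C\!\left(\tfrac{\partial}{\partial t} A(x,t),\tfrac{\partial}{\partial t} B(t,z)\right) dt$ and $(A\star_{C} B)(x,y,z)=\int_{0}^{y} C\!\left(\tfrac{\partial}{\partial t} A(x,t),\tfrac{\partial}{\partial t} B(t,z)\right) dt$, the partial derivatives existing for almost every $t$. *)

theory Defs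
  imports "HOL-Analysis.Analysis"
begin

definition copula2 :: "(real \<Rightarrow> real \<Rightarrow> real) \<Rightarrow> bool" where
  "copula2 C \<longleftrightarrow>
     (\<forall>u\<in>{0..1}. C u 0 = 0 \<and> C 0 u = 0 \<and> C u 1 = u \<and> C 1 u = u) \<and>
     (\<forall>u1 u2 v1 v2. u1 \<in> {0..1} \<longrightarrow> u2 \<in> {0..1} \<longrightarrow> v1 \<in> {0..1} \<longrightarrow> v2 \<in> {0..1} \<longrightarrow>
        u1 \<le> u2 \<longrightarrow> v1 \<le> v2 \<longrightarrow> C u2 v2 - C u2 v1 - C u1 v2 + C u1 v1 \<ge> 0)"

definition copula3 :: "(real \<Rightarrow> real \<Rightarrow> real \<Rightarrow> real) \<Rightarrow> bool" where
  "copula3 C \<longleftrightarrow>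
     (\<forall>u\<in>{0..1}. \<forall>v\<in>{0..1}. C 0 u v = 0 \<and> C u 0 v = 0 \<and> C u v 0 = 0) \<and>
     (\<forall>u\<in>{0..1}. C u 1 1 = u \<and> C 1 u 1 = u \<and> C 1 1 u = u) \<and>
     (\<forall>a1 b1 a2 b2 a3 b3.
        a1 \<in> {0..1} \<longrightarrow> b1 \<in> {0..1} \<longrightarrow> a2 \<in> {0..1} \<longrightarrow> b2 \<in> {0..1} \<longrightarrow>
        a3 \<in> {0..1} \<longrightarrow> b3 \<in> {0..1} \<longrightarrow> a1 \<le> b1 \<longrightarrow> a2 \<le> b2 \<longrightarrow> a3 \<le> b3 \<longrightarrow>
        C b1 b2 b3 - C a1 b2 b3 - C b1 a2 b3 - C b1 b2 a3
          + C a1 a2 b3 + C a1 b2 a3 + C b1 a2 a3 - C a1 a2 a3 \<ge> 0)"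

definition has_marginals ::
  "(real \<Rightarrow> real \<Rightarrow> real \<Rightarrow> real) \<Rightarrow> (real \<Rightarrow> real \<Rightarrow> real) \<Rightarrow> (real \<Rightarrow> real \<Rightarrow> real)
     \<Rightarrow> (real \<Rightarrow> real \<Rightarrow> real) \<Rightarrow> bool" where
  "has_marginals C C12 C13 C23 \<longleftrightarrow>
     (\<forall>u1\<in>{0..1}. \<forall>u2\<in>{0..1}. \<forall>u3\<in>{0..1}.
        C u1 u2 1 = C12 u1 u2 \<and> C u1 1 u3 = C13 u1 u3 \<and> C 1 u2 u3 = C23 u2 u3)"

definition compatible ::
  "(real \<Rightarrow> real \<Rightarrow> real) \<Rightarrow> (real \<Rightarrow> real \<Rightarrow> real) \<Rightarrow> (real \<Rightarrow> real \<Rightarrow> real) \<Rightarrow> bool" where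
  "compatible C12 C13 C23 \<longleftrightarrow> (\<exists>C. copula3 C \<and> has_marginals C C12 C13 C23)"

definition W2 :: "real \<Rightarrow> real \<Rightarrow> real" where "W2 u v = max (u + v - 1) 0"
definition M2 :: "real \<Rightarrow> real \<Rightarrow> real" where "M2 u v = min u v"

text \<open>The star product: integral over [0,y] of C applied to the partial derivatives
  (which exist almost everywhere for copulas; Henstock-Kurzweil integral, insensitive to null sets).\<close>
definition star3 ::
  "(real \<Rightarrow> real \<Rightarrow> real) \<Rightarrow> (real \<Rightarrow> real \<Rightarrow> real) \<Rightarrow> (real \<Rightarrow> real \<Rightarrow> real)
     \<Rightarrow> real \<Rightarrow> real \<Rightarrow> real \<Rightarrow> real" where
  "star3 C A B x y z = integral {0..y} (\<lambda>t. C (deriv (\<lambda>s. A x s) t) (deriv (\<lambda>s. B s z) t))"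

definition ast2 ::
  "(real \<Rightarrow> real \<Rightarrow> real) \<Rightarrow> (real \<Rightarrow> real \<Rightarrow> real) \<Rightarrow> (real \<Rightarrow> real \<Rightarrow> real)
     \<Rightarrow> real \<Rightarrow> real \<Rightarrow> real" where
  "ast2 C A B x z = integral {0..1} (\<lambda>t. C (deriv (\<lambda>s. A x s) t) (deriv (\<lambda>s. B s z) t))"

definition Cpair ::
  "(real \<Rightarrow> real \<Rightarrow> real) \<Rightarrow> (real \<Rightarrow> real \<Rightarrow> real) \<Rightarrow> (real \<Rightarrow> real \<Rightarrow> real)
     \<Rightarrow> nat \<Rightarrow> nat \<Rightarrow> real \<Rightarrow> real \<Rightarrow> real" where
  "Cpair C12 C13 C23 i j =
     (if (i, j) = (1, 2) then C12
      else if (i, j) = (1, 3) then C13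
      else if (i, j) = (2, 3) then C23
      else if (i, j) = (2, 1) then (\<lambda>u v. C12 v u)
      else if (i, j) = (3, 1) then (\<lambda>u v. C13 v u)
      else (\<lambda>u v. C23 v u))"

definition sel3 :: "real \<Rightarrow> real \<Rightarrow> real \<Rightarrow> nat \<Rightarrow> real" where
  "sel3 u1 u2 u3 i = (if i = 1 then u1 else if i = 2 then u2 else u3)"

definition Perms :: "(nat \<times> nat \<times> nat) set" where
  "Perms = {(1, 2, 3), (1, 3, 2), (2, 1, 3)}"

definition CL ::
  "(real \<Rightarrow> real \<Rightarrow> real) \<Rightarrow> (real \<Rightarrow> real \<Rightarrow> real) \<Rightarrow> (real \<Rightarrow> real \<Rightarrow> real)
     \<Rightarrow> real \<Rightarrow> real \<Rightarrow> real \<Rightarrow> real" where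
  "CL C12 C13 C23 u1 u2 u3 =
     Max ((\<lambda>(i, j, k).
        let Cij = Cpair C12 C13 C23 i j; Cjk = Cpair C12 C13 C23 j k; Cik = Cpair C12 C13 C23 i k;
            ui = sel3 u1 u2 u3 i; uj = sel3 u1 u2 u3 j; uk = sel3 u1 u2 u3 k
        in max (star3 W2 Cij Cjk ui uj uk)
               (star3 M2 Cij Cjk ui uj uk + Cik ui uk - ast2 M2 Cij Cjk ui uk)) ` Perms)"

definition CU ::
  "(real \<Rightarrow> real \<Rightarrow> real) \<Rightarrow> (real \<Rightarrow> real \<Rightarrow> real) \<Rightarrow> (real \<Rightarrow> real \<Rightarrow> real)
     \<Rightarrow> real \<Rightarrow> real \<Rightarrow> real \<Rightarrow> real" where
  "CU C12 C13 C23 u1 u2 u3 =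
     Min ((\<lambda>(i, j, k).
        let Cij = Cpair C12 C13 C23 i j; Cjk = Cpair C12 C13 C23 j k; Cik = Cpair C12 C13 C23 i k;
            ui = sel3 u1 u2 u3 i; uj = sel3 u1 u2 u3 j; uk = sel3 u1 u2 u3 k
        in min (star3 M2 Cij Cjk ui uj uk)
               (star3 W2 Cij Cjk ui uj uk + Cik ui uk - ast2 W2 Cij Cjk ui uk)) ` Perms)"

end

theory Submission
  imports Defs
begin


lemma quot_bounds:
  fixes F :: "real \<Rightarrow> real"
  assumes mono: "\<And>x y. x \<le> y \<Longrightarrow> F x \<le> F y"
    and lip: "\<And>x y. x \<le> y \<Longrightarrow> F y - F x \<le> y - x"
    and "h \<noteq> 0"
  shows "0 \<le> (F (x + h) - F x) / h \<and> (F (x + h) - F x) / h \<le> 1"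
proof (cases "h > 0")
  case True
  then show ?thesis using mono[of x "x+h"] lip[of x "x+h"] by (auto simp: divide_simps)
next
  case False
  then have "h < 0" using assms(3) by auto
  then show ?thesis using mono[of "x+h" x] lip[of "x+h" x] by (auto simp: divide_simps)
qed

definition Eset :: "(real \<Rightarrow> real) \<Rightarrow> real \<Rightarrow> real \<Rightarrow> real set" where
  "Eset F p q = {x. (\<forall>n::nat. \<exists>h. h \<noteq> 0 \<and> \<bar>h\<bar> < inverse (real (Suc n)) \<and> (F (x + h) - F x) / h < p) \<and>
                    (\<forall>n::nat. \<exists>h. h \<noteq> 0 \<and> \<bar>h\<bar> < inverse (real (Suc n)) \<and> (F (x + h) - F x) / h > q)}"

lemma diff_crit:
  fixes F :: "real \<Rightarrow> real"
  assumes mono: "\<And>x y. x \<le> y \<Longrightarrow> F x \<le> F y"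
    and lip: "\<And>x y. x \<le> y \<Longrightarrow> F y - F x \<le> y - x"
    and H: "\<And>p q. p \<in> \<rat> \<Longrightarrow> q \<in> \<rat> \<Longrightarrow> p < q \<Longrightarrow> x \<notin> Eset F p q"
  shows "F differentiable (at x)"
proof -
  define Q where "Q h = (F (x + h) - F x) / h" for h
  define T where "T n = Q ` {h. h \<noteq> 0 \<and> \<bar>h\<bar> < inverse (real (Suc n))}" for n :: nat
  have Tb: "v \<in> T n \<Longrightarrow> 0 \<le> v \<and> v \<le> 1" for v n
    using quot_bounds[OF mono lip] unfolding T_def Q_def by auto
  have Tne: "T n \<noteq> {}" for n
  proof -
    have "inverse (real (Suc n)) / 2 \<in> {h. h \<noteq> 0 \<and> \<bar>h\<bar> < inverse (real (Suc n))}" by auto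
    then show ?thesis unfolding T_def by blast
  qed
  have bb: "bdd_below (T n)" "bdd_above (T n)" for n using Tb by (auto intro!: bdd_belowI bdd_aboveI)
  have Tmono: "m \<le> n \<Longrightarrow> T n \<subseteq> T m" for m n
  proof -
    assume "m \<le> n"
    then have iv: "inverse (real (Suc n)) \<le> inverse (real (Suc m))" by (simp add: field_simps)
    show "T n \<subseteq> T m" unfolding T_def
      by (intro image_mono subsetI) (use less_le_trans[OF _ iv] in blast)
  qed
  define lo where "lo n = Inf (T n)" for n
  define hi where "hi n = Sup (T n)" for n
  have loT: "lo n \<le> v" "v \<le> hi n" if "v \<in> T n" for v n
    using that bb unfolding lo_def hi_def by (auto intro: cInf_lower cSup_upper)
  have lomono: "m \<le> n \<Longrightarrow> lo m \<le> lo n" for m n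
    unfolding lo_def using Tmono bb Tne by (meson cInf_superset_mono)
  have himono: "m \<le> n \<Longrightarrow> hi n \<le> hi m" for m n
    unfolding hi_def using Tmono bb Tne by (meson cSup_subset_mono)
  have lohi: "lo m \<le> hi n" for m n
  proof -
    obtain v where v: "v \<in> T (max m n)" using Tne by blast
    show ?thesis using loT[OF v] lomono[of m "max m n"] himono[of n "max m n"] by auto
  qed
  define a where "a = Sup (range lo)"
  define b where "b = Inf (range hi)"
  have bdl: "bdd_above (range lo)" using lohi[of _ 0] by (auto intro!: bdd_aboveI)
  have bdh: "bdd_below (range hi)" using lohi[of 0] by (auto intro!: bdd_belowI)
  have loa: "lo n \<le> a" for n unfolding a_def using bdl by (auto intro: cSup_upper)
  have hib: "b \<le> hi n" for n unfolding b_def using bdh by (auto intro: cInf_lower)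
  have ab: "a \<le> b" unfolding a_def b_def
    by (rule cSup_least) (auto intro!: cInf_greatest lohi)
  have "a = b"
  proof (rule ccontr)
    assume "a \<noteq> b"
    then have "a < b" using ab by auto
    obtain p where p: "p \<in> \<rat>" "a < p" "p < b" using Rats_dense_in_real[OF \<open>a < b\<close>] by blast
    obtain q where q: "q \<in> \<rat>" "p < q" "q < b" using Rats_dense_in_real[OF \<open>p < b\<close>] by blast
    have "x \<in> Eset F p q"
      unfolding Eset_def
    proof (intro CollectI conjI allI)
      fix n
      have "Inf (T n) < p" using loa[of n] p unfolding lo_def by auto
      then obtain v where "v \<in> T n" "v < p" using cInf_less_iff[OF Tne bb(1)] by blast
      then show "\<exists>h. h \<noteq> 0 \<and> \<bar>h\<bar> < inverse (real (Suc n)) \<and> (F (x + h) - F x) / h < p"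
        unfolding T_def Q_def by blast
    next
      fix n
      have "q < Sup (T n)" using hib[of n] q unfolding hi_def by auto
      then obtain v where "v \<in> T n" "q < v" using less_cSup_iff[OF Tne bb(2)] by blast
      then show "\<exists>h. h \<noteq> 0 \<and> \<bar>h\<bar> < inverse (real (Suc n)) \<and> (F (x + h) - F x) / h > q"
        unfolding T_def Q_def by blast
    qed
    then show False using H[OF p(1) q(1) \<open>p < q\<close>] by simp
  qed
  have "(Q \<longlongrightarrow> a) (at 0)"
    unfolding LIM_eq
  proof (intro allI impI)
    fix r :: real assume r: "r > 0"
    have "a - r < Sup (range lo)" using r unfolding a_def by simp
    then obtain n1 where n1: "a - r < lo n1" using less_cSup_iff[OF _ bdl] by auto
    have "Inf (range hi) < a + r" using r \<open>a = b\<close> unfolding b_def by simp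
    then obtain n2 where n2: "hi n2 < a + r" using cInf_less_iff[OF _ bdh] by auto
    define n where "n = max n1 n2"
    show "\<exists>s>0. \<forall>h. h \<noteq> 0 \<and> norm (h - 0) < s \<longrightarrow> norm (Q h - a) < r"
    proof (intro exI[of _ "inverse (real (Suc n))"] conjI allI impI)
      fix h :: real assume h: "h \<noteq> 0 \<and> norm (h - 0) < inverse (real (Suc n))"
      then have "Q h \<in> T n" unfolding T_def by auto
      then have "lo n \<le> Q h" "Q h \<le> hi n" using loT by auto
      moreover have "lo n1 \<le> lo n" "hi n \<le> hi n2" using lomono himono n_def by auto
      ultimately show "norm (Q h - a) < r" using n1 n2 by auto
    qed simp
  qed
  then have "(F has_real_derivative a) (at x)" unfolding DERIV_def Q_def .
  then show ?thesis unfolding real_differentiable_def by blast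
qed

lemma compare_UN:
  fixes M N :: "'a measure" and X :: "'i \<Rightarrow> 'a set"
  assumes C: "countable C" and XM: "\<And>i. i \<in> C \<Longrightarrow> X i \<in> sets M" and XN: "\<And>i. i \<in> C \<Longrightarrow> X i \<in> sets N"
    and d: "disjoint_family_on X C"
    and le: "\<And>i. i \<in> C \<Longrightarrow> emeasure M (X i) \<le> c * emeasure N (X i)"
  shows "emeasure M (\<Union>(X ` C)) \<le> c * emeasure N (\<Union>(X ` C))"
proof -
  have "emeasure M (\<Union>(X ` C)) = (\<integral>\<^sup>+i. emeasure M (X i) \<partial>count_space C)"
    by (rule emeasure_UN_countable[OF XM C d])
  also have "\<dots> \<le> (\<integral>\<^sup>+i. c * emeasure N (X i) \<partial>count_space C)"
    by (rule nn_integral_mono) (use le in auto)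
  also have "\<dots> = c * (\<integral>\<^sup>+i. emeasure N (X i) \<partial>count_space C)"
    by (rule nn_integral_cmult) simp
  also have "(\<integral>\<^sup>+i. emeasure N (X i) \<partial>count_space C) = emeasure N (\<Union>(X ` C))"
    by (rule emeasure_UN_countable[OF XN C d, symmetric])
  finally show ?thesis .
qed

lemma compare_UN2:
  fixes M N :: "'a measure" and X :: "'i \<Rightarrow> 'a set"
  assumes C: "countable C" and XM: "\<And>i. i \<in> C \<Longrightarrow> X i \<in> sets M" and XN: "\<And>i. i \<in> C \<Longrightarrow> X i \<in> sets N"
    and d: "disjoint_family_on X C"
    and le: "\<And>i. i \<in> C \<Longrightarrow> c * emeasure N (X i) \<le> emeasure M (X i)"
  shows "c * emeasure N (\<Union>(X ` C)) \<le> emeasure M (\<Union>(X ` C))"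
proof -
  have "c * emeasure N (\<Union>(X ` C)) = c * (\<integral>\<^sup>+i. emeasure N (X i) \<partial>count_space C)"
    by (simp add: emeasure_UN_countable[OF XN C d])
  also have "\<dots> = (\<integral>\<^sup>+i. c * emeasure N (X i) \<partial>count_space C)"
    by (rule nn_integral_cmult[symmetric]) simp
  also have "\<dots> \<le> (\<integral>\<^sup>+i. emeasure M (X i) \<partial>count_space C)"
    by (rule nn_integral_mono) (use le in auto)
  also have "\<dots> = emeasure M (\<Union>(X ` C))"
    by (rule emeasure_UN_countable[OF XM C d, symmetric])
  finally show ?thesis .
qed

lemma cover_lemma:
  fixes F :: "real \<Rightarrow> real" and P :: "real \<Rightarrow> bool"
  assumes W: "open W" "x \<in> W" and d: "d > 0"
    and H: "\<forall>n::nat. \<exists>h. h \<noteq> 0 \<and> \<bar>h\<bar> < inverse (real (Suc n)) \<and> P ((F (x + h) - F x) / h)"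
  shows "\<exists>c r. 0 < r \<and> r < d \<and> x \<in> cball c r \<and> cball c r \<subseteq> W \<and> P ((F (c + r) - F (c - r)) / (2 * r))"
proof -
  obtain e where e: "e > 0" "ball x e \<subseteq> W" using W open_contains_ball by blast
  obtain n :: nat where n: "inverse (real (Suc n)) < min e d" using reals_Archimedean[of "min e d"] e d by auto
  obtain h where h: "h \<noteq> 0" "\<bar>h\<bar> < inverse (real (Suc n))" "P ((F (x + h) - F x) / h)" using H by blast
  define c where "c = x + h / 2"
  define r where "r = \<bar>h\<bar> / 2"
  have eq: "(F (c + r) - F (c - r)) / (2 * r) = (F (x + h) - F x) / h"
  proof (cases "h > 0")
    case True
    then have e1: "c + r = x + h" "c - r = x" "2 * r = h" unfolding c_def r_def by auto
    show ?thesis unfolding e1 ..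
  next
    case False
    then have "h < 0" using h(1) by auto
    then have e1: "c + r = x" "c - r = x + h" "2 * r = - h" unfolding c_def r_def by auto
    show ?thesis unfolding e1 using h(1) by (simp add: field_simps)
  qed
  show ?thesis
  proof (intro exI conjI)
    show "0 < r" using h(1) unfolding r_def by simp
    show "r < d" using h(1,2) n unfolding r_def by auto
    show "x \<in> cball c r" unfolding c_def r_def by (simp add: dist_real_def)
    show "cball c r \<subseteq> W"
    proof
      fix y assume "y \<in> cball c r"
      then have "\<bar>y - c\<bar> \<le> r" by (simp add: dist_real_def abs_minus_commute)
      moreover have "\<bar>y - x\<bar> \<le> \<bar>y - c\<bar> + \<bar>c - x\<bar>" by linarith
      moreover have "\<bar>c - x\<bar> = r" unfolding c_def r_def by simp
      moreover have "2 * r < e" using h(1,2) n unfolding r_def by auto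
      ultimately have "\<bar>y - x\<bar> < e" by linarith
      then show "y \<in> W" using e(2) by (auto simp: dist_real_def abs_minus_commute)
    qed
    show "P ((F (c + r) - F (c - r)) / (2 * r))" using eq h(3) by simp
  qed
qed

lemma cball_Icc_measures:
  fixes F :: "real \<Rightarrow> real" and c r :: real
  assumes mono: "\<And>x y. x \<le> y \<Longrightarrow> F x \<le> F y" and contF: "continuous_on UNIV F" and r: "0 < r"
  shows "emeasure (interval_measure F) (cball c r) = ennreal (F (c + r) - F (c - r))"
    "emeasure lborel (cball c r) = ennreal (2 * r)"
  using emeasure_interval_measure_Icc[of "c - r" "c + r" F] mono contF r
  by (auto simp: cball_eq_atLeastAtMost)

lemma vitali_ineq:
  fixes F :: "real \<Rightarrow> real"
  assumes mono: "\<And>x y. x \<le> y \<Longrightarrow> F x \<le> F y"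
    and contF: "continuous_on UNIV F"
    and pq: "0 < p" "p < q"
    and SE: "S \<subseteq> Eset F p q" and Sm: "S \<in> lmeasurable" and e: "\<epsilon> > 0"
  shows "q * measure lebesgue S \<le> p * (measure lebesgue S + \<epsilon>)"
proof -
  obtain U where U: "open U" "S \<subseteq> U" "(U - S) \<in> lmeasurable" "emeasure lebesgue (U - S) < ennreal \<epsilon>"
    using sets_lebesgue_outer_open[of S \<epsilon>] Sm e by auto
  define X where "X i = cball (fst i) (snd i)" for i :: "real \<times> real"
  define K1 where "K1 = {(c, r). 0 < r \<and> cball c r \<subseteq> U \<and> (F (c + r) - F (c - r)) / (2 * r) < p}"
  obtain C1 where C1: "countable C1" "C1 \<subseteq> K1"
     "pairwise (\<lambda>i j. disjnt (cball (fst i) (snd i)) (cball (fst j) (snd j))) C1"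
     "negligible(S - (\<Union>i \<in> C1. cball (fst i) (snd i)))"
  proof (rule Vitali_covering_theorem_cballs[where K=K1 and r=snd and S=S and a=fst])
    show "\<And>i. i \<in> K1 \<Longrightarrow> 0 < snd i" unfolding K1_def by auto
    fix x d :: real assume "x \<in> S" "0 < d"
    then have "\<exists>(c::real) (r::real). 0 < r \<and> r < d \<and> x \<in> cball c r \<and> cball c r \<subseteq> U \<and> (\<lambda>v. v < p) ((F (c + r) - F (c - r)) / (2 * r))"
      using SE U by (intro cover_lemma) (auto simp: Eset_def)
    then show "\<exists>i. i \<in> K1 \<and> x \<in> cball (fst i) (snd i) \<and> snd i < d"
      unfolding K1_def by force
  qed auto
  define V where "V = (\<Union>i \<in> C1. ball (fst i) (snd i))"
  have oV: "open V" unfolding V_def by auto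
  define K2 where "K2 = {(c, r). 0 < r \<and> cball c r \<subseteq> V \<and> (F (c + r) - F (c - r)) / (2 * r) > q}"
  obtain C2 where C2: "countable C2" "C2 \<subseteq> K2"
     "pairwise (\<lambda>i j. disjnt (cball (fst i) (snd i)) (cball (fst j) (snd j))) C2"
     "negligible((S \<inter> V) - (\<Union>i \<in> C2. cball (fst i) (snd i)))"
  proof (rule Vitali_covering_theorem_cballs[where K=K2 and r=snd and S="S \<inter> V" and a=fst])
    show "\<And>i. i \<in> K2 \<Longrightarrow> 0 < snd i" unfolding K2_def by auto
    fix x d :: real assume "x \<in> S \<inter> V" "0 < d"
    then have "\<exists>(c::real) (r::real). 0 < r \<and> r < d \<and> x \<in> cball c r \<and> cball c r \<subseteq> V \<and> (\<lambda>v. v > q) ((F (c + r) - F (c - r)) / (2 * r))"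
      using SE oV by (intro cover_lemma) (auto simp: Eset_def)
    then show "\<exists>i. i \<in> K2 \<and> x \<in> cball (fst i) (snd i) \<and> snd i < d"
      unfolding K2_def by force
  qed auto
  define B1 where "B1 = \<Union>(X ` C1)"
  define B2 where "B2 = \<Union>(X ` C2)"
  have null3: "negligible (B1 - V)"
  proof -
    have "B1 - V \<subseteq> (\<lambda>i. fst i - snd i) ` C1 \<union> (\<lambda>i. fst i + snd i) ` C1"
    proof
      fix x assume "x \<in> B1 - V"
      then obtain i where i: "i \<in> C1" "x \<in> cball (fst i) (snd i)" "x \<notin> ball (fst i) (snd i)"
        unfolding B1_def X_def V_def by auto
      then have "x = fst i - snd i \<or> x = fst i + snd i" by (auto simp: dist_real_def)
      then show "x \<in> (\<lambda>i. fst i - snd i) ` C1 \<union> (\<lambda>i. fst i + snd i) ` C1" using i(1) by auto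
    qed
    moreover have "countable ((\<lambda>i. fst i - snd i) ` C1 \<union> (\<lambda>i. fst i + snd i) ` C1)" using C1(1) by auto
    ultimately show ?thesis
      by (metis countable_imp_null_set_lborel negligible_iff_null_sets null_sets_completionI negligible_subset)
  qed
  define Nall where "Nall = (S - B1) \<union> (B1 - V) \<union> ((S \<inter> V) - B2)"
  have nullN: "negligible Nall" unfolding Nall_def B1_def B2_def X_def using C1(4) C2(4) null3[unfolded B1_def X_def]
    by auto
  have SB2: "S \<subseteq> B2 \<union> Nall" unfolding Nall_def by auto
  have B2V: "B2 \<subseteq> V" unfolding B2_def X_def using C2(2) unfolding K2_def by fastforce
  have VB1: "V \<subseteq> B1" unfolding V_def B1_def X_def by auto
  have B1U: "B1 \<subseteq> U" unfolding B1_def X_def using C1(2) unfolding K1_def by fastforce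
  have Xb: "X i \<in> sets borel" for i unfolding X_def by auto
  have B1b: "B1 \<in> sets borel" unfolding B1_def using C1(1) Xb by auto
  have B2b: "B2 \<in> sets borel" unfolding B2_def using C2(1) Xb by auto
  have disj: "disjoint_family_on X C" if "pairwise (\<lambda>i j. disjnt (cball (fst i) (snd i)) (cball (fst j) (snd j))) C" for C
    using that unfolding disjoint_family_on_def pairwise_def disjnt_def X_def by auto
  let ?\<nu> = "interval_measure F"
  have c1: "emeasure ?\<nu> B1 \<le> ennreal p * emeasure lborel B1"
    unfolding B1_def
  proof (rule compare_UN[OF C1(1) _ _ disj[OF C1(3)]])
    fix i assume "i \<in> C1"
    then have i: "0 < snd i" "(F (fst i + snd i) - F (fst i - snd i)) / (2 * snd i) < p"
      using C1(2) unfolding K1_def by auto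
    then have "F (fst i + snd i) - F (fst i - snd i) \<le> p * (2 * snd i)" by (simp add: divide_less_eq)
    then show "emeasure ?\<nu> (X i) \<le> ennreal p * emeasure lborel (X i)"
      unfolding X_def using cball_Icc_measures[OF mono contF i(1)] pq i(1)
      by (simp add: ennreal_mult[symmetric])
  qed (use Xb in auto)
  have c2: "ennreal q * emeasure lborel B2 \<le> emeasure ?\<nu> B2"
    unfolding B2_def
  proof (rule compare_UN2[OF C2(1) _ _ disj[OF C2(3)]])
    fix i assume "i \<in> C2"
    then have i: "0 < snd i" "(F (fst i + snd i) - F (fst i - snd i)) / (2 * snd i) > q"
      using C2(2) unfolding K2_def by auto
    then have "q * (2 * snd i) \<le> F (fst i + snd i) - F (fst i - snd i)" by (simp add: less_divide_eq)
    then show "ennreal q * emeasure lborel (X i) \<le> emeasure ?\<nu> (X i)"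
      unfolding X_def using cball_Icc_measures[OF mono contF i(1)] pq i(1)
      by (simp add: ennreal_mult[symmetric] ennreal_leI)
  qed (use Xb in auto)
  have c3: "emeasure ?\<nu> B2 \<le> emeasure ?\<nu> B1"
    by (rule emeasure_mono) (use B2V VB1 B1b in auto)
  have Sl: "S \<in> sets lebesgue" using Sm by auto
  have Ul: "U \<in> sets lebesgue" using U(1) by (metis borel_open sets_completionI_sets sets_lborel)
  have s1: "emeasure lebesgue S \<le> emeasure lebesgue B2"
  proof -
    have B2l: "B2 \<in> sets lebesgue" using B2b by (metis sets_completionI_sets sets_lborel)
    have "emeasure lebesgue S \<le> emeasure lebesgue (B2 \<union> Nall)"
      by (rule emeasure_mono[OF SB2]) (use B2l nullN in \<open>auto simp: negligible_iff_null_sets\<close>)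
    also have "\<dots> = emeasure lebesgue B2"
      by (rule emeasure_Un_null_set) (use B2l nullN in \<open>auto simp: negligible_iff_null_sets\<close>)
    finally show ?thesis .
  qed
  have s2: "emeasure lebesgue B2 = emeasure lborel B2" using B2b by simp
  have s3: "emeasure lebesgue B1 = emeasure lborel B1" using B1b by simp
  have s4: "emeasure lebesgue B1 \<le> emeasure lebesgue U"
    by (rule emeasure_mono[OF B1U Ul])
  have s5: "emeasure lebesgue U \<le> ennreal (measure lebesgue S) + ennreal \<epsilon>"
  proof -
    have "U = S \<union> (U - S)" using U(2) by auto
    then have "emeasure lebesgue U = emeasure lebesgue S + emeasure lebesgue (U - S)"
      using plus_emeasure[of S lebesgue "U - S"] Sl U(3) by auto
    also have "\<dots> \<le> ennreal (measure lebesgue S) + ennreal \<epsilon>"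
      using U(4) Sm by (intro add_mono) (auto simp: emeasure_eq_measure2)
    finally show ?thesis .
  qed
  have "ennreal q * ennreal (measure lebesgue S) \<le> ennreal p * (ennreal (measure lebesgue S) + ennreal \<epsilon>)"
  proof -
    have "ennreal q * ennreal (measure lebesgue S) = ennreal q * emeasure lebesgue S"
      using Sm by (simp add: emeasure_eq_measure2)
    also have "\<dots> \<le> ennreal q * emeasure lborel B2" using s1 s2 by (simp add: mult_left_mono)
    also have "\<dots> \<le> ennreal p * emeasure lborel B1" using c1 c2 c3 by order
    also have "\<dots> \<le> ennreal p * (ennreal (measure lebesgue S) + ennreal \<epsilon>)"
      using s3 s4 s5 by (simp add: mult_left_mono)
    finally show ?thesis .
  qed
  then have "ennreal (q * measure lebesgue S) \<le> ennreal (p * (measure lebesgue S + \<epsilon>))"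
    using pq e by (simp add: ennreal_mult[symmetric] ennreal_plus[symmetric] del: ennreal_plus)
  then show ?thesis using pq e by (simp add: ennreal_le_iff)
qed

lemma lip_cont:
  fixes F :: "real \<Rightarrow> real"
  assumes mono: "\<And>x y. x \<le> y \<Longrightarrow> F x \<le> F y"
    and lip: "\<And>x y. x \<le> y \<Longrightarrow> F y - F x \<le> y - x"
  shows "continuous_on UNIV F"
proof (rule lipschitz_on_continuous_on[of 1])
  show "1-lipschitz_on UNIV F"
  proof (rule lipschitz_onI)
    fix x y :: real
    show "dist (F x) (F y) \<le> 1 * dist x y"
      using mono[of x y] lip[of x y] mono[of y x] lip[of y x] by (cases "x \<le> y") (auto simp: dist_real_def)
  qed simp
qed

lemma Eset_negl:
  fixes F :: "real \<Rightarrow> real"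
  assumes mono: "\<And>x y. x \<le> y \<Longrightarrow> F x \<le> F y"
    and lip: "\<And>x y. x \<le> y \<Longrightarrow> F y - F x \<le> y - x"
    and pq: "p < q"
  shows "negligible (Eset F p q)"
proof (cases "p \<le> 0")
  case True
  have "Eset F p q = {}"
  proof (rule ccontr)
    assume "Eset F p q \<noteq> {}"
    then obtain x h where "h \<noteq> 0" "(F (x + h) - F x) / h < p" unfolding Eset_def by blast
    then show False using quot_bounds[OF mono lip, of h x] True by auto
  qed
  then show ?thesis by simp
next
  case False
  then have p0: "0 < p" by simp
  have contF: "continuous_on UNIV F" by (rule lip_cont[OF mono lip])
  define E where "E = Eset F p q"
  define A where "A n = (\<Union>h \<in> {h. h \<noteq> 0 \<and> \<bar>h\<bar> < inverse (real (Suc n))}. {x. (F (x + h) - F x) / h < p})" for n :: nat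
  define B where "B n = (\<Union>h \<in> {h. h \<noteq> 0 \<and> \<bar>h\<bar> < inverse (real (Suc n))}. {x. p < q \<and> q < (F (x + h) - F x) / h})" for n :: nat
  have qc: "continuous_on UNIV (\<lambda>x. (F (x + h) - F x) / h)" for h
  proof (cases "h = 0")
    case True then show ?thesis by simp
  next
    case False then show ?thesis by (intro continuous_intros continuous_on_compose2[OF contF]) auto
  qed
  have oA: "open (A n)" for n unfolding A_def
    by (intro open_UN ballI open_Collect_less qc continuous_on_const)
  have oB: "open (B n)" for n unfolding B_def using pq
    by (intro open_UN ballI) (simp add: open_Collect_less[OF continuous_on_const qc])
  have EAB: "E = (\<Inter>n. A n) \<inter> (\<Inter>n. B n)" unfolding E_def Eset_def A_def B_def using pq by auto
  have ol: "open T \<Longrightarrow> T \<in> sets lebesgue" for T :: "real set"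
    by (metis borel_open sets_completionI_sets sets_lborel)
  have El: "E \<in> sets lebesgue" unfolding EAB
    by (intro sets.Int sets.countable_INT) (auto intro: ol oA oB)
  define S where "S k = E \<inter> cball 0 (real k)" for k :: nat
  have Sneg: "negligible (S k)" for k
  proof -
    have Sm: "S k \<in> lmeasurable" unfolding S_def
      by (rule fmeasurableI2[OF lmeasurable_cball[of 0 "real k"]]) (use El in auto)
    define m where "m = measure lebesgue (S k)"
    have m0: "m \<ge> 0" unfolding m_def by simp
    have ineq: "q * m \<le> p * (m + e)" if "e > 0" for e
      unfolding m_def by (rule vitali_ineq[OF mono contF p0 pq _ Sm that]) (auto simp: S_def E_def)
    have "m = 0"
    proof (rule ccontr)
      assume "m \<noteq> 0"
      then have mp: "m > 0" using m0 by simp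
      have ep: "(q - p) * m / (2 * p) > 0" using mp pq p0 by simp
      have "q * m \<le> p * (m + (q - p) * m / (2 * p))" by (rule ineq[OF ep])
      also have "\<dots> = p * m + (q - p) * m / 2" using p0 by (simp add: field_simps)
      finally have hh: "q * m \<le> p * m + (q - p) * m / 2" .
      have "(q - p) * m = q * m - p * m" by (simp add: left_diff_distrib)
      then have "(q - p) * m \<le> 0" using hh by linarith
      then show False using mp pq by (simp add: mult_le_0_iff)
    qed
    then show ?thesis using Sm negligible_iff_measure0 unfolding m_def by blast
  qed
  have "E = (\<Union>k. S k)"
  proof
    show "E \<subseteq> (\<Union>k. S k)"
    proof
      fix x assume "x \<in> E"
      obtain k :: nat where "\<bar>x\<bar> \<le> real k" using real_arch_simple by blast
      then show "x \<in> (\<Union>k. S k)" using \<open>x \<in> E\<close> unfolding S_def by (auto simp: dist_real_def)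
    qed
  qed (auto simp: S_def)
  moreover have "negligible (\<Union>k. S k)"
    by (rule negligible_countable_Union) (use Sneg in auto)
  ultimately show ?thesis unfolding E_def by simp
qed

lemma lebesgue_diff:
  fixes F :: "real \<Rightarrow> real"
  assumes mono: "\<And>x y. x \<le> y \<Longrightarrow> F x \<le> F y"
    and lip: "\<And>x y. x \<le> y \<Longrightarrow> F y - F x \<le> y - x"
  shows "negligible {x. \<not> F differentiable (at x)}"
proof -
  define I where "I = {(p, q). p \<in> \<rat> \<and> q \<in> \<rat> \<and> p < (q::real)}"
  have cI: "countable I"
    by (rule countable_subset[of _ "\<rat> \<times> \<rat>"]) (auto simp: I_def countable_rat)
  have sub: "{x. \<not> F differentiable (at x)} \<subseteq> \<Union>((\<lambda>(p, q). Eset F p q) ` I)"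
  proof
    fix x assume "x \<in> {x. \<not> F differentiable (at x)}"
    then have "\<not> (\<forall>p q. p \<in> \<rat> \<longrightarrow> q \<in> \<rat> \<longrightarrow> p < q \<longrightarrow> x \<notin> Eset F p q)"
      using diff_crit[OF mono lip] by blast
    then show "x \<in> \<Union>((\<lambda>(p, q). Eset F p q) ` I)" unfolding I_def by blast
  qed
  have "negligible (\<Union>((\<lambda>(p, q). Eset F p q) ` I))"
    by (rule negligible_countable_Union) (use cI Eset_negl[OF mono lip] in \<open>auto simp: I_def\<close>)
  then show ?thesis using sub negligible_subset by blast
qed



lemma ftc_lip:
  fixes F :: "real \<Rightarrow> real"
  assumes mono: "\<And>x y. x \<le> y \<Longrightarrow> F x \<le> F y"
    and lip: "\<And>x y. x \<le> y \<Longrightarrow> F y - F x \<le> y - x"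
  obtains N where "negligible N"
    "\<And>x. x \<notin> N \<Longrightarrow> (F has_real_derivative deriv F x) (at x)"
    "\<And>a b. a \<le> b \<Longrightarrow> (deriv F has_integral F b - F a) {a..b}"
    "\<And>a b. deriv F absolutely_integrable_on {a..b}"
proof -
  define N where "N = {x. \<not> F differentiable (at x)}"
  have negN: "negligible N" unfolding N_def by (rule lebesgue_diff[OF mono lip])
  have D: "(F has_real_derivative deriv F x) (at x)" if "x \<notin> N" for x
    using that unfolding N_def by (simp add: DERIV_deriv_iff_real_differentiable)
  have Db: "0 \<le> deriv F x \<and> deriv F x \<le> 1" if "x \<notin> N" for x
  proof -
    have lim: "((\<lambda>h. (F (x + h) - F x) / h) \<longlongrightarrow> deriv F x) (at 0)"
      using D[OF that] unfolding DERIV_def .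
    have ev: "\<forall>\<^sub>F h in at (0::real). 0 \<le> (F (x + h) - F x) / h \<and> (F (x + h) - F x) / h \<le> 1"
      unfolding eventually_at by (rule exI[of _ 1]) (use quot_bounds[OF mono lip] in auto)
    have "0 \<le> deriv F x" by (rule tendsto_lowerbound[OF lim]) (use ev in \<open>auto elim: eventually_mono\<close>)
    moreover have "deriv F x \<le> 1" by (rule tendsto_upperbound[OF lim]) (use ev in \<open>auto elim: eventually_mono\<close>)
    ultimately show ?thesis by simp
  qed
  have contF: "continuous_on UNIV F"
  proof (rule lipschitz_on_continuous_on[of 1])
    show "1-lipschitz_on UNIV F"
    proof (rule lipschitz_onI)
      fix x y :: real
      show "dist (F x) (F y) \<le> 1 * dist x y"
        using mono[of x y] lip[of x y] mono[of y x] lip[of y x] by (cases "x \<le> y") (auto simp: dist_real_def)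
    qed simp
  qed
  define \<delta> where "\<delta> k = inverse (real (Suc k))" for k
  have \<delta>pos: "\<delta> k > 0" for k unfolding \<delta>_def by simp
  define q where "q k t = (F (t + \<delta> k) - F t) / \<delta> k" for k t
  define f where "f k t = (if t \<in> N then 0 else q k t)" for k t
  define g where "g t = (if t \<in> N then 0 else deriv F t)" for t
  have qb: "0 \<le> q k t \<and> q k t \<le> 1" for k t
    unfolding q_def using quot_bounds[OF mono lip, of "\<delta> k" t] \<delta>pos[of k] by auto
  have qc: "continuous_on UNIV (q k)" for k
    unfolding q_def using \<delta>pos[of k]
    by (intro continuous_intros continuous_on_compose2[OF contF]) auto
  have qi: "q k integrable_on {a..b}" for k a b
    by (rule integrable_continuous_interval) (use qc in \<open>auto intro: continuous_on_subset\<close>)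
  have fi: "f k integrable_on {a..b}" for k a b
    by (rule integrable_spike[OF qi negN]) (auto simp: f_def)
  have fq: "integral {a..b} (f k) = integral {a..b} (q k)" for k a b
    by (rule integral_spike[OF negN]) (auto simp: f_def)
  have conv: "(\<lambda>k. f k t) \<longlonglongrightarrow> g t" for t
  proof (cases "t \<in> N")
    case True then show ?thesis by (simp add: f_def g_def)
  next
    case False
    have lim: "((\<lambda>h. (F (t + h) - F t) / h) \<longlongrightarrow> deriv F t) (at 0)"
      using D[OF False] unfolding DERIV_def .
    have fl: "filterlim \<delta> (at 0) sequentially"
      unfolding filterlim_at using \<delta>pos LIMSEQ_inverse_real_of_nat
      by (auto simp: \<delta>_def[abs_def] intro!: always_eventually)
    have "(\<lambda>k. q k t) \<longlonglongrightarrow> deriv F t"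
      unfolding q_def using filterlim_compose[OF lim fl] by (simp add: o_def)
    then show ?thesis using False by (simp add: f_def g_def)
  qed
  have dc: "g integrable_on {a..b} \<and> (\<lambda>k. integral {a..b} (f k)) \<longlonglongrightarrow> integral {a..b} g" for a b
    using dominated_convergence[of f "{a..b}" "\<lambda>_. 1" g, OF fi integrable_const_ivl _ conv]
      qb by (auto simp: f_def)
  have gnn: "0 \<le> g t" for t using Db by (auto simp: g_def)
  have gai: "g absolutely_integrable_on {a..b}" for a b
    using dc gnn by (auto intro: nonnegative_absolutely_integrable_1)
  have cint: "F c * d \<le> integral {c..c+d} F \<and> integral {c..c+d} F \<le> (F c + d) * d" if "d > 0" for c d
  proof -
    have i: "F integrable_on {c..c+d}" by (rule integrable_continuous_interval) (use contF in \<open>auto intro: continuous_on_subset\<close>)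
    have "integral {c..c+d} (\<lambda>t. F c) \<le> integral {c..c+d} F"
      by (rule integral_le[OF _ i]) (auto intro: mono)
    moreover have "integral {c..c+d} F \<le> integral {c..c+d} (\<lambda>t. F c + d)"
    proof (rule integral_le[OF i])
      fix t assume "t \<in> {c..c+d}"
      then show "F t \<le> F c + d" using lip[of c t] by auto
    qed auto
    ultimately show ?thesis using that by (auto simp: mult.commute)
  qed
  have qint: "integral {a..b} (q k) = (integral {b..b + \<delta> k} F - integral {a..a + \<delta> k} F) / \<delta> k"
    if "a \<le> b" for a b k
  proof -
    have iF: "F integrable_on {a..b + \<delta> k}"
      by (rule integrable_continuous_interval) (use contF in \<open>auto intro: continuous_on_subset\<close>)
    have sh: "integral {a..b} (\<lambda>t. F (t + \<delta> k)) = integral {a + \<delta> k..b + \<delta> k} F"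
      using integral_shift_Icc_real[of a b F "\<delta> k"] by (simp add: o_def add.commute)
    have c1: "integral {a..a + \<delta> k} F + integral {a + \<delta> k..b + \<delta> k} F = integral {a..b + \<delta> k} F"
      using Henstock_Kurzweil_Integration.integral_combine[OF _ _ iF, of "a + \<delta> k"] \<delta>pos[of k] that by auto
    have c2: "integral {a..b} F + integral {b..b + \<delta> k} F = integral {a..b + \<delta> k} F"
      using Henstock_Kurzweil_Integration.integral_combine[OF _ _ iF, of b] \<delta>pos[of k] that by auto
    have iF1: "F integrable_on {a..b}" and iF2: "(\<lambda>t. F (t + \<delta> k)) integrable_on {a..b}"
      by (rule integrable_continuous_interval; use contF \<delta>pos in \<open>auto intro!: continuous_on_subset continuous_on_compose2[OF contF] continuous_intros\<close>)+
    have "integral {a..b} (q k) = integral {a..b} (\<lambda>t. F (t + \<delta> k) - F t) / \<delta> k"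
      by (simp add: q_def[abs_def])
    also have "\<dots> = (integral {a..b} (\<lambda>t. F (t + \<delta> k)) - integral {a..b} F) / \<delta> k"
      using iF1 iF2 by (simp add: integral_diff)
    finally show ?thesis using sh c1 c2 by simp
  qed
  have lim2: "(\<lambda>k. integral {a..b} (f k)) \<longlonglongrightarrow> F b - F a" if "a \<le> b" for a b
  proof -
    have bd: "norm (integral {a..b} (f k) - (F b - F a)) \<le> \<delta> k" for k
    proof -
      have dp: "\<delta> k > 0" by (rule \<delta>pos)
      have e: "integral {a..b} (f k) = (integral {b..b + \<delta> k} F - integral {a..a + \<delta> k} F) / \<delta> k"
        using fq qint[OF that] by simp
      have l: "(F b - F a - \<delta> k) * \<delta> k \<le> integral {b..b + \<delta> k} F - integral {a..a + \<delta> k} F"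
        and u: "integral {b..b + \<delta> k} F - integral {a..a + \<delta> k} F \<le> (F b - F a + \<delta> k) * \<delta> k"
        using cint[OF dp, of a] cint[OF dp, of b] by (auto simp: algebra_simps)
      have "F b - F a - \<delta> k \<le> integral {a..b} (f k)" unfolding e using l dp by (simp add: le_divide_eq)
      moreover have "integral {a..b} (f k) \<le> F b - F a + \<delta> k" unfolding e using u dp by (simp add: divide_le_eq)
      ultimately show ?thesis by auto
    qed
    have "(\<lambda>k. integral {a..b} (f k) - (F b - F a)) \<longlonglongrightarrow> 0"
      by (rule Lim_null_comparison[OF always_eventually[OF allI[OF bd]]])
        (unfold \<delta>_def[abs_def], rule LIMSEQ_inverse_real_of_nat)
    then show ?thesis by (rule LIM_zero_cancel)
  qed
  have gint: "(g has_integral F b - F a) {a..b}" if "a \<le> b" for a b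
  proof -
    have "integral {a..b} g = F b - F a"
      using LIMSEQ_unique[OF conjunct2[OF dc] lim2[OF that]] .
    then show ?thesis using dc by (metis has_integral_integral)
  qed
  show ?thesis
  proof (rule that[OF negN D])
    show "(deriv F has_integral F b - F a) {a..b}" if "a \<le> b" for a b
      by (rule has_integral_spike[OF negN _ gint[OF that]]) (auto simp: g_def)
    show "deriv F absolutely_integrable_on {a..b}" for a b
      by (rule absolutely_integrable_spike[OF gai negN]) (auto simp: g_def)
  qed auto
qed



lemma integral_le_negl:
  fixes f g :: "real \<Rightarrow> real"
  assumes "f integrable_on S" "g integrable_on S" "negligible N" "\<And>x. x \<in> S - N \<Longrightarrow> f x \<le> g x"
  shows "integral S f \<le> integral S g"
proof -
  let ?f = "\<lambda>x. if x \<in> N then g x else f x"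
  have i: "?f integrable_on S"
    by (rule integrable_spike[OF assms(1) assms(3)]) auto
  have e: "integral S ?f = integral S f"
    by (rule integral_spike[OF assms(3)]) auto
  have "integral S ?f \<le> integral S g"
    by (rule integral_le[OF i assms(2)]) (use assms(4) in auto)
  then show ?thesis using e by simp
qed

definition cl :: "real \<Rightarrow> real" where "cl s = max 0 (min 1 s)"

lemma cl_props: "cl s \<in> {0..1}" "s \<le> t \<Longrightarrow> cl s \<le> cl t" "s \<le> t \<Longrightarrow> cl t - cl s \<le> t - s"
  "s \<in> {0..1} \<Longrightarrow> cl s = s"
  by (auto simp: cl_def)

lemma deriv_pointwise:
  fixes g a b :: "real \<Rightarrow> real"
  assumes ga: "(g has_real_derivative dg) (at t)" and aa: "(a has_real_derivative da) (at t)"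
    and bb: "(b has_real_derivative db) (at t)"
    and t: "0 < t" "t < 1"
    and inc: "\<And>k. 0 < k \<Longrightarrow> k < 1 - t \<Longrightarrow>
       g (t+k) - g t \<le> a (t+k) - a t \<and> g (t+k) - g t \<le> b (t+k) - b t \<and> 0 \<le> g (t+k) - g t \<and>
       a (t+k) - a t + (b (t+k) - b t) - k \<le> g (t+k) - g t"
  shows "W2 da db \<le> dg \<and> dg \<le> M2 da db"
proof -
  let ?F = "at_right (0::real)"
  have lim: "((\<lambda>k. (f (t + k) - f t) / k) \<longlongrightarrow> d) ?F" if "(f has_real_derivative d) (at t)" for f d
    using that unfolding DERIV_def by (rule tendsto_mono[OF at_le, rotated]) simp
  have ev: "\<forall>\<^sub>F k in ?F. 0 < k \<and> k < 1 - t"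
    using eventually_at_right_real[of 0 "1 - t"] t by (auto elim: eventually_mono)
  have ev2: "\<forall>\<^sub>F k in ?F. (g (t+k) - g t)/k \<le> (a (t+k) - a t)/k \<and> (g (t+k) - g t)/k \<le> (b (t+k) - b t)/k
     \<and> 0 \<le> (g (t+k) - g t)/k \<and> (a (t+k) - a t)/k + (b (t+k) - b t)/k - 1 \<le> (g (t+k) - g t)/k"
  proof (rule eventually_mono[OF ev])
    fix k assume k: "0 < k \<and> k < 1 - t"
    have i: "g (t+k) - g t \<le> a (t+k) - a t" "g (t+k) - g t \<le> b (t+k) - b t" "0 \<le> g (t+k) - g t"
       "a (t+k) - a t + (b (t+k) - b t) - k \<le> g (t+k) - g t" using inc[of k] k by auto
    have e: "(a (t+k) - a t)/k + (b (t+k) - b t)/k - 1 = (a (t+k) - a t + (b (t+k) - b t) - k)/k"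
      using k by (simp add: field_simps)
    show "(g (t+k) - g t)/k \<le> (a (t+k) - a t)/k \<and> (g (t+k) - g t)/k \<le> (b (t+k) - b t)/k
     \<and> 0 \<le> (g (t+k) - g t)/k \<and> (a (t+k) - a t)/k + (b (t+k) - b t)/k - 1 \<le> (g (t+k) - g t)/k"
      unfolding e using i k by (auto intro: divide_right_mono)
  qed
  have n: "?F \<noteq> bot" by simp
  have 1: "dg \<le> da" by (rule tendsto_le[OF n lim[OF aa] lim[OF ga]]) (rule eventually_mono[OF ev2], auto)
  have 2: "dg \<le> db" by (rule tendsto_le[OF n lim[OF bb] lim[OF ga]]) (rule eventually_mono[OF ev2], auto)
  have 3: "0 \<le> dg" by (rule tendsto_le[OF n lim[OF ga] tendsto_const]) (rule eventually_mono[OF ev2], auto)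
  have 4: "da + db - 1 \<le> dg"
    by (rule tendsto_le[OF n lim[OF ga] tendsto_diff[OF tendsto_add[OF lim[OF aa] lim[OF bb]] tendsto_const]])
      (rule eventually_mono[OF ev2], auto)
  show ?thesis using 1 2 3 4 by (auto simp: W2_def M2_def)
qed

lemma key:
  fixes D :: "real \<Rightarrow> real \<Rightarrow> real \<Rightarrow> real" and A B Cxz :: "real \<Rightarrow> real \<Rightarrow> real"
  assumes inc: "\<And>a1 b1 a2 b2 a3 b3. a1 \<in> {0..1} \<Longrightarrow> b1 \<in> {0..1} \<Longrightarrow> a2 \<in> {0..1} \<Longrightarrow> b2 \<in> {0..1} \<Longrightarrow>
        a3 \<in> {0..1} \<Longrightarrow> b3 \<in> {0..1} \<Longrightarrow> a1 \<le> b1 \<Longrightarrow> a2 \<le> b2 \<Longrightarrow> a3 \<le> b3 \<Longrightarrow>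
        D b1 b2 b3 - D a1 b2 b3 - D b1 a2 b3 - D b1 b2 a3
          + D a1 a2 b3 + D a1 b2 a3 + D b1 a2 a3 - D a1 a2 a3 \<ge> 0"
    and gr: "\<And>u v. u \<in> {0..1} \<Longrightarrow> v \<in> {0..1} \<Longrightarrow> D 0 u v = 0 \<and> D u 0 v = 0 \<and> D u v 0 = 0"
    and m1: "\<And>t. t \<in> {0..1} \<Longrightarrow> D 1 t 1 = t"
    and x: "x \<in> {0..1}" and y: "y \<in> {0..1}" and z: "z \<in> {0..1}"
    and A: "\<And>t. t \<in> {0..1} \<Longrightarrow> A x t = D x t 1"
    and B: "\<And>t. t \<in> {0..1} \<Longrightarrow> B t z = D 1 t z"
    and Cxz: "Cxz x z = D x 1 z"
  shows "star3 W2 A B x y z \<le> D x y z \<and> D x y z \<le> star3 M2 A B x y z \<and>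
         star3 M2 A B x y z + Cxz x z - ast2 M2 A B x z \<le> D x y z \<and>
         D x y z \<le> star3 W2 A B x y z + Cxz x z - ast2 W2 A B x z"
proof -
  have incr: "D x t 1 - D x s 1 \<le> t - s \<and> D 1 t z - D 1 s z \<le> t - s \<and>
      D x t z - D x s z \<le> D x t 1 - D x s 1 \<and> D x t z - D x s z \<le> D 1 t z - D 1 s z \<and>
      0 \<le> D x t z - D x s z \<and> D x t 1 - D x s 1 + (D 1 t z - D 1 s z) - (t - s) \<le> D x t z - D x s z"
    if st: "s \<in> {0..1}" "t \<in> {0..1}" "s \<le> t" for s t
  proof -
    have a: "0 \<le> D 1 t 1 - D x t 1 - D 1 s 1 - D 1 t 0 + D x s 1 + D x t 0 + D 1 s 0 - D x s 0"
      using inc[of x 1 s t 0 1] x st by auto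
    have b: "0 \<le> D 1 t 1 - D 1 t 1 - D 1 s 1 - D 1 t z + D 1 s 1 + D 1 t z + D 1 s z - D 1 s z"
      by simp
    have b: "0 \<le> D 1 t 1 - D x t 1 - D 1 s 1 - D 1 t z + D x s 1 + D x t z + D 1 s z - D x s z"
      using inc[of x 1 s t z 1] x z st by auto
    have c: "0 \<le> D x t 1 - D 0 t 1 - D x s 1 - D x t z + D 0 s 1 + D 0 t z + D x s z - D 0 s z"
      using inc[of 0 x s t z 1] x z st by auto
    have d: "0 \<le> D 1 t z - D x t z - D 1 s z - D 1 t 0 + D x s z + D x t 0 + D 1 s 0 - D x s 0"
      using inc[of x 1 s t 0 z] x z st by auto
    have e: "0 \<le> D x t z - D 0 t z - D x s z - D x t 0 + D 0 s z + D 0 t 0 + D x s 0 - D 0 s 0"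
      using inc[of 0 x s t 0 z] x z st by auto
    have f: "0 \<le> D 1 t 1 - D 0 t 1 - D 1 s 1 - D 1 t z + D 0 s 1 + D 0 t z + D 1 s z - D 0 s z"
      using inc[of 0 1 s t z 1] x z st by auto
    show ?thesis using a b c d e f gr[of t 1] gr[of s 1] gr[of t z] gr[of s z] gr[of x t] gr[of x s]
        gr[of 1 t] gr[of 1 s] gr[of x 1] gr[of 1 1] gr[of t 0] gr[of s 0] m1[of s] m1[of t] st x z
      by auto
  qed
  define \<alpha> where "\<alpha> s = D x (cl s) 1" for s
  define \<beta> where "\<beta> s = D 1 (cl s) z" for s
  define g where "g s = D x (cl s) z" for s
  have clp: "cl s \<in> {0..1}" "cl t \<in> {0..1}" "cl s \<le> cl t" "cl t - cl s \<le> t - s" if "s \<le> t" for s t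
    using cl_props that by auto
  have \<alpha>m: "\<alpha> s \<le> \<alpha> t" "\<alpha> t - \<alpha> s \<le> t - s" if "s \<le> t" for s t
    using incr[OF clp(1-3)[OF that]] clp[OF that] incr[OF clp(1-3)[OF that]] unfolding \<alpha>_def by auto
  have \<beta>m: "\<beta> s \<le> \<beta> t" "\<beta> t - \<beta> s \<le> t - s" if "s \<le> t" for s t
    using incr[OF clp(1-3)[OF that]] clp[OF that] unfolding \<beta>_def by auto
  have gm: "g s \<le> g t" "g t - g s \<le> t - s" if "s \<le> t" for s t
    using incr[OF clp(1-3)[OF that]] clp[OF that] unfolding g_def by auto
  obtain Na where Na: "negligible Na" "\<And>t. t \<notin> Na \<Longrightarrow> (\<alpha> has_real_derivative deriv \<alpha> t) (at t)"
    "\<And>a b. a \<le> b \<Longrightarrow> (deriv \<alpha> has_integral \<alpha> b - \<alpha> a) {a..b}"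
    "\<And>a b. deriv \<alpha> absolutely_integrable_on {a..b}"
    using ftc_lip[of \<alpha>] \<alpha>m by metis
  obtain Nb where Nb: "negligible Nb" "\<And>t. t \<notin> Nb \<Longrightarrow> (\<beta> has_real_derivative deriv \<beta> t) (at t)"
    "\<And>a b. a \<le> b \<Longrightarrow> (deriv \<beta> has_integral \<beta> b - \<beta> a) {a..b}"
    "\<And>a b. deriv \<beta> absolutely_integrable_on {a..b}"
    using ftc_lip[of \<beta>] \<beta>m by metis
  obtain Ng where Ng: "negligible Ng" "\<And>t. t \<notin> Ng \<Longrightarrow> (g has_real_derivative deriv g t) (at t)"
    "\<And>a b. a \<le> b \<Longrightarrow> (deriv g has_integral g b - g a) {a..b}"
    "\<And>a b. deriv g absolutely_integrable_on {a..b}"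
    using ftc_lip[of g] gm by metis
  define N where "N = Na \<union> Nb \<union> Ng \<union> {0,1}"
  have negN: "negligible N" unfolding N_def using Na(1) Nb(1) Ng(1) by auto
  have dA: "deriv (A x) t = deriv \<alpha> t" and dB: "deriv (\<lambda>s. B s z) t = deriv \<beta> t"
    if "t \<in> {0<..<1}" for t
  proof -
    have ev: "\<forall>\<^sub>F s in nhds t. s \<in> {0<..<1}"
      using that by (intro eventually_nhds_in_open) auto
    show "deriv (A x) t = deriv \<alpha> t"
      by (rule deriv_cong_ev[OF eventually_mono[OF ev]]) (auto simp: A \<alpha>_def cl_props)
    show "deriv (\<lambda>s. B s z) t = deriv \<beta> t"
      by (rule deriv_cong_ev[OF eventually_mono[OF ev]]) (auto simp: B \<beta>_def cl_props)
  qed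
  have pw: "W2 (deriv \<alpha> t) (deriv \<beta> t) \<le> deriv g t \<and> deriv g t \<le> M2 (deriv \<alpha> t) (deriv \<beta> t)"
    if "t \<in> {0..1} - N" for t
  proof -
    have t: "0 < t" "t < 1" "t \<notin> Na" "t \<notin> Nb" "t \<notin> Ng" using that by (auto simp: N_def)
    show ?thesis
    proof (rule deriv_pointwise[OF Ng(2)[OF t(5)] Na(2)[OF t(3)] Nb(2)[OF t(4)] t(1,2)])
      fix k :: real assume k: "0 < k" "k < 1 - t"
      have e: "cl (t+k) = t+k" "cl t = t" using k t by (auto simp: cl_def)
      show "g (t+k) - g t \<le> \<alpha> (t+k) - \<alpha> t \<and> g (t+k) - g t \<le> \<beta> (t+k) - \<beta> t \<and> 0 \<le> g (t+k) - g t \<and>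
       \<alpha> (t+k) - \<alpha> t + (\<beta> (t+k) - \<beta> t) - k \<le> g (t+k) - g t"
        using incr[of t "t+k"] k t unfolding g_def \<alpha>_def \<beta>_def e by auto
    qed
  qed
  define wW where "wW t = W2 (deriv \<alpha> t) (deriv \<beta> t)" for t
  define wM where "wM t = M2 (deriv \<alpha> t) (deriv \<beta> t)" for t
  have aiW: "wW absolutely_integrable_on {0..1}"
    unfolding wW_def W2_def
    by (intro absolutely_integrable_max_1 set_integral_diff(1) set_integral_add(1) Na(4) Nb(4) absolutely_integrable_on_const)
      auto
  have aiM: "wM absolutely_integrable_on {0..1}"
    unfolding wM_def M2_def
    by (intro absolutely_integrable_min_1 Na(4) Nb(4))
  have iW: "wW integrable_on {c..d}" and iM: "wM integrable_on {c..d}" and ih: "deriv g integrable_on {c..d}"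
    if "{c..d} \<subseteq> {0..1}" for c d
    using integrable_on_subinterval[OF set_lebesgue_integral_eq_integral(1)[OF aiW] that]
      integrable_on_subinterval[OF set_lebesgue_integral_eq_integral(1)[OF aiM] that]
      set_lebesgue_integral_eq_integral(1)[OF Ng(4)] by auto
  have cmp: "integral {c..d} wW \<le> integral {c..d} (deriv g) \<and> integral {c..d} (deriv g) \<le> integral {c..d} wM"
    if "{c..d} \<subseteq> {0..1}" for c d
    using integral_le_negl[OF iW[OF that] ih[OF that] negN] integral_le_negl[OF ih[OF that] iM[OF that] negN]
      pw that unfolding wW_def wM_def by blast
  have sW: "star3 W2 A B x y z = integral {0..y} wW" and sM: "star3 M2 A B x y z = integral {0..y} wM"
    and aW: "ast2 W2 A B x z = integral {0..1} wW" and aM: "ast2 M2 A B x z = integral {0..1} wM"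
    unfolding star3_def ast2_def wW_def wM_def
    using y by (auto intro!: integral_spike[OF negN] simp: dA dB N_def)
  have sp: "integral {0..1} f = integral {0..y} f + integral {y..1} f" if "f integrable_on {0..1}" for f :: "real \<Rightarrow> real"
    using Henstock_Kurzweil_Integration.integral_combine[where a=0 and c=y and b=1 and f=f] y that by auto
  have hy: "integral {0..y} (deriv g) = D x y z" and h1: "integral {y..1} (deriv g) = Cxz x z - D x y z"
    using Ng(3)[of 0 y] Ng(3)[of y 1] y gr[of x z] x z unfolding g_def
    by (auto simp: cl_props Cxz integral_unique)
  have y01: "{0..y} \<subseteq> {0..1}" "{y..1} \<subseteq> {0..1}" using y by auto
  show ?thesis
    using cmp[OF y01(1)] cmp[OF y01(2)] sp[OF iW[of 0 1]] sp[OF iM[of 0 1]] sW sM aW aM hy h1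
    by auto
qed

theorem theorem5p3:
  fixes C12 C13 C23 :: "real \<Rightarrow> real \<Rightarrow> real"
    and Ct :: "real \<Rightarrow> real \<Rightarrow> real \<Rightarrow> real"
    and u1 u2 u3 :: real
  assumes "copula2 C12" and "copula2 C13" and "copula2 C23"
    and "compatible C12 C13 C23"
    and "copula3 Ct" and "has_marginals Ct C12 C13 C23"
    and "u1 \<in> {0..1}" and "u2 \<in> {0..1}" and "u3 \<in> {0..1}"
  shows "CL C12 C13 C23 u1 u2 u3 \<le> Ct u1 u2 u3 \<and> Ct u1 u2 u3 \<le> CU C12 C13 C23 u1 u2 u3"
proof -
  note c3 = assms(5)[unfolded copula3_def]
  have gr: "\<And>u v. u \<in> {0..1} \<Longrightarrow> v \<in> {0..1} \<Longrightarrow> Ct 0 u v = 0 \<and> Ct u 0 v = 0 \<and> Ct u v 0 = 0"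
    using c3 by blast
  have mg: "\<And>u. u \<in> {0..1} \<Longrightarrow> Ct u 1 1 = u \<and> Ct 1 u 1 = u \<and> Ct 1 1 u = u"
    using c3 by blast
  have inc: "\<And>a1 b1 a2 b2 a3 b3. a1 \<in> {0..1} \<Longrightarrow> b1 \<in> {0..1} \<Longrightarrow> a2 \<in> {0..1} \<Longrightarrow> b2 \<in> {0..1} \<Longrightarrow>
        a3 \<in> {0..1} \<Longrightarrow> b3 \<in> {0..1} \<Longrightarrow> a1 \<le> b1 \<Longrightarrow> a2 \<le> b2 \<Longrightarrow> a3 \<le> b3 \<Longrightarrow>
        Ct b1 b2 b3 - Ct a1 b2 b3 - Ct b1 a2 b3 - Ct b1 b2 a3
          + Ct a1 a2 b3 + Ct a1 b2 a3 + Ct b1 a2 a3 - Ct a1 a2 a3 \<ge> 0"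
    using c3 by blast
  note hm = assms(6)[unfolded has_marginals_def]
  have m12: "\<And>a b. a \<in> {0..1} \<Longrightarrow> b \<in> {0..1} \<Longrightarrow> Ct a b 1 = C12 a b" using hm by blast
  have m13: "\<And>a b. a \<in> {0..1} \<Longrightarrow> b \<in> {0..1} \<Longrightarrow> Ct a 1 b = C13 a b" using hm by blast
  have m23: "\<And>a b. a \<in> {0..1} \<Longrightarrow> b \<in> {0..1} \<Longrightarrow> Ct 1 a b = C23 a b" using hm by blast
  have K1: "star3 W2 C12 C23 u1 u2 u3 \<le> Ct u1 u2 u3 \<and> Ct u1 u2 u3 \<le> star3 M2 C12 C23 u1 u2 u3 \<and>
         star3 M2 C12 C23 u1 u2 u3 + C13 u1 u3 - ast2 M2 C12 C23 u1 u3 \<le> Ct u1 u2 u3 \<and>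
         Ct u1 u2 u3 \<le> star3 W2 C12 C23 u1 u2 u3 + C13 u1 u3 - ast2 W2 C12 C23 u1 u3"
    by (rule key[where D=Ct, OF inc]) (use gr mg m12 m13 m23 assms(7-9) in auto)
  have K2: "star3 W2 C13 (\<lambda>u v. C23 v u) u1 u3 u2 \<le> Ct u1 u2 u3 \<and> Ct u1 u2 u3 \<le> star3 M2 C13 (\<lambda>u v. C23 v u) u1 u3 u2 \<and>
         star3 M2 C13 (\<lambda>u v. C23 v u) u1 u3 u2 + C12 u1 u2 - ast2 M2 C13 (\<lambda>u v. C23 v u) u1 u2 \<le> Ct u1 u2 u3 \<and>
         Ct u1 u2 u3 \<le> star3 W2 C13 (\<lambda>u v. C23 v u) u1 u3 u2 + C12 u1 u2 - ast2 W2 C13 (\<lambda>u v. C23 v u) u1 u2"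
  proof (rule key[where D="\<lambda>a b c. Ct a c b"])
    fix a1 b1 a2 b2 a3 b3 :: real
    assume "a1 \<in> {0..1}" "b1 \<in> {0..1}" "a2 \<in> {0..1}" "b2 \<in> {0..1}" "a3 \<in> {0..1}" "b3 \<in> {0..1}"
      "a1 \<le> b1" "a2 \<le> b2" "a3 \<le> b3"
    then show "Ct b1 b3 b2 - Ct a1 b3 b2 - Ct b1 b3 a2 - Ct b1 a3 b2 + Ct a1 b3 a2 + Ct a1 a3 b2 + Ct b1 a3 a2 - Ct a1 a3 a2 \<ge> 0"
      using inc[of a1 b1 a3 b3 a2 b2] by linarith
  qed (use gr mg m12 m13 m23 assms(7-9) in auto)
  have K3: "star3 W2 (\<lambda>u v. C12 v u) C13 u2 u1 u3 \<le> Ct u1 u2 u3 \<and> Ct u1 u2 u3 \<le> star3 M2 (\<lambda>u v. C12 v u) C13 u2 u1 u3 \<and>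
         star3 M2 (\<lambda>u v. C12 v u) C13 u2 u1 u3 + C23 u2 u3 - ast2 M2 (\<lambda>u v. C12 v u) C13 u2 u3 \<le> Ct u1 u2 u3 \<and>
         Ct u1 u2 u3 \<le> star3 W2 (\<lambda>u v. C12 v u) C13 u2 u1 u3 + C23 u2 u3 - ast2 W2 (\<lambda>u v. C12 v u) C13 u2 u3"
  proof (rule key[where D="\<lambda>a b c. Ct b a c"])
    fix a1 b1 a2 b2 a3 b3 :: real
    assume "a1 \<in> {0..1}" "b1 \<in> {0..1}" "a2 \<in> {0..1}" "b2 \<in> {0..1}" "a3 \<in> {0..1}" "b3 \<in> {0..1}"
      "a1 \<le> b1" "a2 \<le> b2" "a3 \<le> b3"
    then show "Ct b2 b1 b3 - Ct b2 a1 b3 - Ct a2 b1 b3 - Ct b2 b1 a3 + Ct a2 a1 b3 + Ct b2 a1 a3 + Ct a2 b1 a3 - Ct a2 a1 a3 \<ge> 0"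
      using inc[of a2 b2 a1 b1 a3 b3] by linarith
  qed (use gr mg m12 m13 m23 assms(7-9) in auto)
  have e1: "CL C12 C13 C23 u1 u2 u3 = Max {max (star3 W2 C12 C23 u1 u2 u3) (star3 M2 C12 C23 u1 u2 u3 + C13 u1 u3 - ast2 M2 C12 C23 u1 u3),
     max (star3 W2 C13 (\<lambda>u v. C23 v u) u1 u3 u2) (star3 M2 C13 (\<lambda>u v. C23 v u) u1 u3 u2 + C12 u1 u2 - ast2 M2 C13 (\<lambda>u v. C23 v u) u1 u2),
     max (star3 W2 (\<lambda>u v. C12 v u) C13 u2 u1 u3) (star3 M2 (\<lambda>u v. C12 v u) C13 u2 u1 u3 + C23 u2 u3 - ast2 M2 (\<lambda>u v. C12 v u) C13 u2 u3)}"
    unfolding CL_def Perms_def by (simp add: Cpair_def sel3_def Let_def)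
  have e2: "CU C12 C13 C23 u1 u2 u3 = Min {min (star3 M2 C12 C23 u1 u2 u3) (star3 W2 C12 C23 u1 u2 u3 + C13 u1 u3 - ast2 W2 C12 C23 u1 u3),
     min (star3 M2 C13 (\<lambda>u v. C23 v u) u1 u3 u2) (star3 W2 C13 (\<lambda>u v. C23 v u) u1 u3 u2 + C12 u1 u2 - ast2 W2 C13 (\<lambda>u v. C23 v u) u1 u2),
     min (star3 M2 (\<lambda>u v. C12 v u) C13 u2 u1 u3) (star3 W2 (\<lambda>u v. C12 v u) C13 u2 u1 u3 + C23 u2 u3 - ast2 W2 (\<lambda>u v. C12 v u) C13 u2 u3)}"
    unfolding CU_def Perms_def by (simp add: Cpair_def sel3_def Let_def)
  show ?thesis unfolding e1 e2 using K1 K2 K3 by simp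
qed

end
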